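(* Let $\mathbb{F}$ be a field and $\mathcal{H}=(Q_0,Q_1,\beta)$ a directed tensor-labeled hypergraph. Suppose there exist $r\ge1$, distinct elements $w_0,w_1,\dots,w_r\in V_{\mathrm{macro}}$ and distinct hyperedges $e_1,\dots,e_r\in Q_1$ with $\beta(\mathbf{1}_{e_i})=(w_0,w_i)$ for $i=1,\dots,r$. If there is $(\alpha_1,\dots,\alpha_r)\in\mathbb{F}^r\setminus\{0\}$ with $\sum_{i=1}^r\alpha_i(w_i-w_0)=0$ in $T(\mathbb{F}^{Q_0})$, then $\xi:=\sum_i\alpha_i\mathbf{1}_{e_i}$ satisfies $\partial_\beta(\xi)=0$ and $B_{\mathrm{macro}}(\xi)\in(\mathrm{Im}(B_{\mathrm{macro}})\cap\mathrm{Ker}(\hat\phi))\setminus\{0\}$. In particular $\delta(\mathcal{H})\ge1$.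
   Context: $T(\mathbb{F}^{Q_0})=\bigoplus_{k\ge0}(\mathbb{F}^{Q_0})^{\otimes k}$. A directed tensor-labeled hypergraph is $\mathcal{H}=(Q_0,Q_1,\beta)$ ($Q_0,Q_1$ finite) with $\beta:\mathbb{F}^{Q_1}\to T(\mathbb{F}^{Q_0})\times T(\mathbb{F}^{Q_0})$ linear, $\beta(\mathbf{1}_e)=(A_e,B_e)$. $\partial_\beta:\mathbf{1}_e\mapsto B_e-A_e$. $V_{\mathrm{macro}}=\{A_e\}\cup\{B_e\}$; $B_{\mathrm{macro}}:\mathbb{F}^{Q_1}\to\mathbb{F}^{V_{\mathrm{macro}}}$, $\mathbf{1}_e\mapsto\mathbf{1}_{B_e}-\mathbf{1}_{A_e}$; $\hat\phi:\mathbb{F}^{V_{\mathrm{macro}}}\to T(\mathbb{F}^{Q_0})$, $\mathbf{1}_w\mapsto w$; $\delta(\mathcal{H})=\dim(\mathrm{Im}B_{\mathrm{macro}}\cap\mathrm{Ker}\hat\phi)$. *)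

theory Defs
  imports Complex_Main "HOL-Library.Function_Algebras"
begin

text \<open>Model of the tensor algebra T(F^{Q0}): the words (lists) over Q0 form a basis
  of T(F^{Q0}) (degree k part = words of length k), so an element is a finitely
  supported coefficient function on words with letters in Q0.\<close>

type_synonym ('v,'a) tensor = "'v list \<Rightarrow> 'a"

definition tensor_alg :: "'v set \<Rightarrow> ('v,'a::zero) tensor set" where
  "tensor_alg Q0 = {t. finite {u. t u \<noteq> 0} \<and> (\<forall>u. t u \<noteq> 0 \<longrightarrow> set u \<subseteq> Q0)}"

definition fscale :: "'a::field \<Rightarrow> ('b \<Rightarrow> 'a) \<Rightarrow> ('b \<Rightarrow> 'a)" where
  "fscale c f = (\<lambda>x. c * f x)"

text \<open>A directed tensor-labeled hypergraph (Q0,Q1,beta); beta is the linear map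
  determined by beta(1_e) = (A e, B e).\<close>
definition hypergraph :: "'v set \<Rightarrow> 'e set \<Rightarrow> ('e \<Rightarrow> ('v,'a::zero) tensor) \<Rightarrow> ('e \<Rightarrow> ('v,'a) tensor) \<Rightarrow> bool" where
  "hypergraph Q0 Q1 A B \<longleftrightarrow> finite Q0 \<and> finite Q1 \<and>
     (\<forall>e\<in>Q1. A e \<in> tensor_alg Q0 \<and> B e \<in> tensor_alg Q0)"

definition ind :: "'e \<Rightarrow> 'e \<Rightarrow> 'a::{zero,one}" where
  "ind e = (\<lambda>x. if x = e then 1 else 0)"

definition boundary :: "'e set \<Rightarrow> ('e \<Rightarrow> ('v,'a::field) tensor) \<Rightarrow> ('e \<Rightarrow> ('v,'a) tensor)
    \<Rightarrow> ('e \<Rightarrow> 'a) \<Rightarrow> ('v,'a) tensor" where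
  "boundary Q1 A B xi = (\<lambda>u. \<Sum>e\<in>Q1. xi e * (B e u - A e u))"

definition Vmacro :: "'e set \<Rightarrow> ('e \<Rightarrow> ('v,'a) tensor) \<Rightarrow> ('e \<Rightarrow> ('v,'a) tensor) \<Rightarrow> ('v,'a) tensor set" where
  "Vmacro Q1 A B = A ` Q1 \<union> B ` Q1"

definition Bmacro :: "'e set \<Rightarrow> ('e \<Rightarrow> ('v,'a::field) tensor) \<Rightarrow> ('e \<Rightarrow> ('v,'a) tensor)
    \<Rightarrow> ('e \<Rightarrow> 'a) \<Rightarrow> (('v,'a) tensor \<Rightarrow> 'a)" where
  "Bmacro Q1 A B xi = (\<lambda>w. \<Sum>e\<in>Q1. xi e * ((if w = B e then 1 else 0) - (if w = A e then 1 else 0)))"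

definition phihat :: "'e set \<Rightarrow> ('e \<Rightarrow> ('v,'a::field) tensor) \<Rightarrow> ('e \<Rightarrow> ('v,'a) tensor)
    \<Rightarrow> (('v,'a) tensor \<Rightarrow> 'a) \<Rightarrow> ('v,'a) tensor" where
  "phihat Q1 A B c = (\<lambda>u. \<Sum>w\<in>Vmacro Q1 A B. c w * w u)"

definition FVmacro :: "'e set \<Rightarrow> ('e \<Rightarrow> ('v,'a) tensor) \<Rightarrow> ('e \<Rightarrow> ('v,'a) tensor) \<Rightarrow> (('v,'a::zero) tensor \<Rightarrow> 'a) set" where
  "FVmacro Q1 A B = {c. \<forall>w. w \<notin> Vmacro Q1 A B \<longrightarrow> c w = 0}"

definition ImBmacro where
  "ImBmacro Q1 A B = {Bmacro Q1 A B xi | xi. \<forall>e. e \<notin> Q1 \<longrightarrow> xi e = 0}"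

definition Kerphihat where
  "Kerphihat Q1 A B = {c \<in> FVmacro Q1 A B. phihat Q1 A B c = (\<lambda>_. 0)}"

definition delta :: "'e set \<Rightarrow> ('e \<Rightarrow> ('v,'a::field) tensor) \<Rightarrow> ('e \<Rightarrow> ('v,'a) tensor) \<Rightarrow> nat" where
  "delta Q1 A B = vector_space.dim fscale (ImBmacro Q1 A B \<inter> Kerphihat Q1 A B)"

end

theory Submission
  imports Defs
begin

lemma sum_fun_app: "(sum f S) x = (\<Sum>i\<in>S. f i x)"
  by (induct S rule: infinite_finite_induct) auto

lemma vs_fscale: "vector_space (fscale :: 'a::field \<Rightarrow> ('b \<Rightarrow> 'a) \<Rightarrow> ('b \<Rightarrow> 'a))"
  by unfold_locales (auto simp: fscale_def fun_eq_iff algebra_simps)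

lemma (in vector_space) dim_pos:
  assumes "x \<in> S" "x \<noteq> 0" "S \<subseteq> span G" "finite G"
  shows "1 \<le> dim S"
proof -
  obtain Bs where Bs: "Bs \<subseteq> S" "independent Bs" "S \<subseteq> span Bs" "card Bs = dim S"
    by (rule basis_exists)
  have "Bs \<subseteq> span G" using Bs assms by blast
  then have "finite Bs" using independent_span_bound[OF assms(4) Bs(2)] by blast
  moreover have "Bs \<noteq> {}" using Bs(3) assms(1,2) by auto
  ultimately show ?thesis using Bs(4) by (metis One_nat_def Suc_leI card_gt_0_iff)
qed

lemma Bmacro_ind:
  assumes "f \<in> Q1" "finite Q1"
  shows "Bmacro Q1 A B (ind f) = (\<lambda>v. (if v = B f then 1 else 0) - (if v = A f then 1 else 0))"
proof
  fix v
  have "Bmacro Q1 A B (ind f) v = (\<Sum>g\<in>Q1. if g = f then (if v = B g then 1 else 0) - (if v = A g then 1 else 0) else 0)"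
    unfolding Bmacro_def ind_def by (intro sum.cong refl) simp
  also have "\<dots> = (if v = B f then 1 else 0) - (if v = A f then 1 else 0)"
    by (simp only: sum.delta[OF assms(2)]) (simp add: assms)
  finally show "Bmacro Q1 A B (ind f) v = (if v = B f then 1 else 0) - (if v = A f then 1 else 0)" .
qed

lemma Bmacro_expand:
  assumes "finite Q1"
  shows "Bmacro Q1 A B xi = (\<Sum>f\<in>Q1. fscale (xi f) (Bmacro Q1 A B (ind f)))"
proof (rule ext)
  fix x
  have "(\<Sum>f\<in>Q1. fscale (xi f) (Bmacro Q1 A B (ind f))) x
     = (\<Sum>f\<in>Q1. xi f * ((if x = B f then 1 else 0) - (if x = A f then 1 else 0)))"
    by (simp add: sum_fun_app fscale_def Bmacro_ind[OF _ assms])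
  then show "Bmacro Q1 A B xi x = (\<Sum>f\<in>Q1. fscale (xi f) (Bmacro Q1 A B (ind f))) x"
    by (simp add: Bmacro_def)
qed

lemma ind_sum:
  fixes g :: "'e \<Rightarrow> 'b::comm_ring_1"
  assumes "a \<in> S" "finite S"
  shows "(\<Sum>f\<in>S. ind a f * g f) = g a"
proof -
  have "(\<Sum>f\<in>S. ind a f * g f) = (\<Sum>f\<in>S. if a = f then g f else 0)"
    by (intro sum.cong refl) (simp add: ind_def)
  also have "\<dots> = g a" using assms by simp
  finally show ?thesis .
qed

theorem proposition4p7:
  fixes Q0 :: "'v set" and Q1 :: "'e set"
    and A B :: "'e \<Rightarrow> ('v, 'a::field) tensor"
    and r :: nat and w :: "nat \<Rightarrow> ('v,'a) tensor" and e :: "nat \<Rightarrow> 'e"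
    and \<alpha> :: "nat \<Rightarrow> 'a"
  assumes H: "hypergraph Q0 Q1 A B"
    and r: "r \<ge> 1"
    and w_in: "\<forall>i\<in>{0..r}. w i \<in> Vmacro Q1 A B"
    and w_dist: "inj_on w {0..r}"
    and e_in: "\<forall>i\<in>{1..r}. e i \<in> Q1"
    and e_dist: "inj_on e {1..r}"
    and e_lab: "\<forall>i\<in>{1..r}. A (e i) = w 0 \<and> B (e i) = w i"
    and \<alpha>_nz: "\<exists>i\<in>{1..r}. \<alpha> i \<noteq> 0"
    and rel: "(\<lambda>u. \<Sum>i=1..r. \<alpha> i * (w i u - w 0 u)) = (\<lambda>_. 0)"
  shows "let \<xi> = (\<lambda>x. \<Sum>i=1..r. \<alpha> i * ind (e i) x) in
           boundary Q1 A B \<xi> = (\<lambda>_. 0) \<and>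
           Bmacro Q1 A B \<xi> \<in> (ImBmacro Q1 A B \<inter> Kerphihat Q1 A B) - {(\<lambda>_. 0)} \<and>
           delta Q1 A B \<ge> 1"
proof -
  define \<xi> where "\<xi> = (\<lambda>x. \<Sum>i=1..r. \<alpha> i * ind (e i) x)"
  have fQ1: "finite Q1" using H by (simp add: hypergraph_def)
  have fV: "finite (Vmacro Q1 A B)" using fQ1 by (simp add: Vmacro_def)
  have swap: "(\<Sum>f\<in>Q1. \<xi> f * g f) = (\<Sum>i=1..r. \<alpha> i * g (e i))" for g :: "'e \<Rightarrow> 'a"
  proof -
    have "(\<Sum>f\<in>Q1. \<xi> f * g f) = (\<Sum>f\<in>Q1. \<Sum>i=1..r. \<alpha> i * (ind (e i) f * g f))"
      by (simp add: \<xi>_def sum_distrib_right mult.assoc)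
    also have "\<dots> = (\<Sum>i=1..r. \<alpha> i * (\<Sum>f\<in>Q1. ind (e i) f * g f))"
      by (subst sum.swap) (simp add: sum_distrib_left)
    also have "\<dots> = (\<Sum>i=1..r. \<alpha> i * g (e i))"
      using e_in fQ1 by (intro sum.cong refl) (simp add: ind_sum)
    finally show ?thesis .
  qed
  have bd: "boundary Q1 A B \<xi> = (\<lambda>_. 0)"
    unfolding boundary_def swap using e_lab rel
    by (simp add: fun_eq_iff)
  define v where "v = Bmacro Q1 A B \<xi>"
  have v: "v x = (\<Sum>i=1..r. \<alpha> i * ((if x = w i then 1 else 0) - (if x = w 0 then 1 else 0)))" for x
    unfolding v_def Bmacro_def swap using e_lab by (intro sum.cong refl) auto
  obtain j where j: "j \<in> {1..r}" "\<alpha> j \<noteq> 0" using \<alpha>_nz by blast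
  have "v (w j) = (\<Sum>i=1..r. (if i = j then \<alpha> i else 0))"
    unfolding v
  proof (intro sum.cong refl)
    fix i assume i: "i \<in> {1..r}"
    have "w j \<noteq> w 0"
    proof
      assume "w j = w 0"
      then have "j = 0" using inj_onD[OF w_dist] j(1) by simp
      then show False using j(1) by simp
    qed
    moreover have "(w j = w i) = (i = j)" using w_dist i j(1) by (auto simp: inj_on_def)
    ultimately show "\<alpha> i * ((if w j = w i then 1 else 0) - (if w j = w 0 then 1 else 0)) = (if i = j then \<alpha> i else 0)"
      by auto
  qed
  also have "\<dots> = \<alpha> j" using j(1) by simp
  finally have vnz: "v \<noteq> (\<lambda>_. 0)" using j(2) by (metis)
  have supp: "\<forall>x. x \<notin> Q1 \<longrightarrow> \<xi> x = 0"
    using e_in by (auto simp: \<xi>_def ind_def intro!: sum.neutral)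
  have vIm: "v \<in> ImBmacro Q1 A B" unfolding ImBmacro_def v_def using supp by blast
  have vF: "v \<in> FVmacro Q1 A B"
    unfolding FVmacro_def mem_Collect_eq
  proof (intro allI impI)
    fix x assume x: "x \<notin> Vmacro Q1 A B"
    have "\<forall>i\<in>{0..r}. x \<noteq> w i" using w_in x by blast
    then show "v x = 0" unfolding v by (intro sum.neutral) auto
  qed
  have "phihat Q1 A B v = (\<lambda>u. \<Sum>i=1..r. \<alpha> i * (w i u - w 0 u))"
  proof
    fix u
    have "phihat Q1 A B v u = (\<Sum>x\<in>Vmacro Q1 A B. \<Sum>i=1..r. \<alpha> i * (((if x = w i then 1 else 0) - (if x = w 0 then 1 else 0)) * x u))"
      unfolding phihat_def v by (simp add: sum_distrib_right mult.assoc)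
    also have "\<dots> = (\<Sum>i=1..r. \<alpha> i * (\<Sum>x\<in>Vmacro Q1 A B. ((if x = w i then 1 else 0) - (if x = w 0 then 1 else 0)) * x u))"
      by (subst sum.swap) (simp add: sum_distrib_left)
    also have "\<dots> = (\<Sum>i=1..r. \<alpha> i * (w i u - w 0 u))"
    proof (intro sum.cong refl)
      fix i assume i: "i \<in> {1..r}"
      have wi: "w i \<in> Vmacro Q1 A B" "w 0 \<in> Vmacro Q1 A B" using w_in i by auto
      have "(\<Sum>x\<in>Vmacro Q1 A B. ((if x = w i then 1 else 0) - (if x = w 0 then 1 else 0)) * x u)
          = (\<Sum>x\<in>Vmacro Q1 A B. (if x = w i then x u else 0)) - (\<Sum>x\<in>Vmacro Q1 A B. (if x = w 0 then x u else 0))"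
      proof -
        have "(\<Sum>x\<in>Vmacro Q1 A B. ((if x = w i then 1 else 0) - (if x = w 0 then 1 else 0)) * x u)
           = (\<Sum>x\<in>Vmacro Q1 A B. (if x = w i then x u else 0) - (if x = w 0 then x u else 0))"
          by (rule sum.cong) simp_all
        then show ?thesis by (simp only: sum_subtractf)
      qed
      also have "\<dots> = w i u - w 0 u" using wi fV by simp
      finally show "\<alpha> i * (\<Sum>x\<in>Vmacro Q1 A B. ((if x = w i then 1 else 0) - (if x = w 0 then 1 else 0)) * x u) = \<alpha> i * (w i u - w 0 u)"
        by simp
    qed
    finally show "phihat Q1 A B v u = (\<Sum>i=1..r. \<alpha> i * (w i u - w 0 u))" .
  qed
  then have vK: "v \<in> Kerphihat Q1 A B" using rel vF by (simp add: Kerphihat_def)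
  interpret vs: vector_space "fscale :: 'a \<Rightarrow> (('v,'a) tensor \<Rightarrow> 'a) \<Rightarrow> _" by (rule vs_fscale)
  have sub: "ImBmacro Q1 A B \<inter> Kerphihat Q1 A B \<subseteq> vs.span ((\<lambda>f. Bmacro Q1 A B (ind f)) ` Q1)"
  proof
    fix y assume "y \<in> ImBmacro Q1 A B \<inter> Kerphihat Q1 A B"
    then have "y \<in> ImBmacro Q1 A B" by (rule IntD1)
    then obtain xi where y: "y = Bmacro Q1 A B xi" unfolding ImBmacro_def by (auto simp only: mem_Collect_eq)
    show "y \<in> vs.span ((\<lambda>f. Bmacro Q1 A B (ind f)) ` Q1)"
      unfolding trans[OF y Bmacro_expand[OF fQ1, of A B xi]]
      by (intro vs.span_sum vs.span_scale vs.span_base) auto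
  qed
  have "1 \<le> delta Q1 A B"
    unfolding delta_def
    by (rule vs.dim_pos[OF IntI[OF vIm vK] _ sub]) (use vnz fQ1 in \<open>auto simp: zero_fun_def\<close>)
  then show ?thesis using bd vIm vK vnz unfolding Let_def \<xi>_def[symmetric] v_def by simp
qed

end
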